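(* Let $V=\mathrm{span}_{\mathbb{F}_q}\{x_1,\dots,x_n\}\subset S$, let $m\ge1$, let $\lambda=(n^m)$ be the partition with $m$ parts all equal to $n$, and let $\mu\subseteq\lambda$ be a partition with conjugate $\mu'$. Then, in $\widehat S$, $$T_{\lambda/\mu}(V)=(-1)^{nm+|\mu|}\,\frac{\det\big(x_i^{q^{\,n+j-\mu'_j-1}}\big)_{1\le i,j\le n}}{\det\big(x_i^{q^{\,n+j-m-1}}\big)_{1\le i,j\le n}}.$$
   Context: Let $q$ be a power of a prime $p$, $S=\mathbb{F}_q[x_1,\dots,x_n]$, $\widehat S=\bigcup_{r\ge0}\mathbb{F}_q[x_1^{q^{-r}},\dots,x_n^{q^{-r}}]$ (so $x_i^{q^{e}}$ makes sense for all $e\in\mathbb{Z}$), $\varphi(u)=u^q$ the Frobenius automorphism of $\widehat S$. For a subspace $W\subset S$ of dimension $k$ with basis $w_1,\dots,w_k$ and strictly decreasing nonnegative integers $\alpha_1>\dots>\alpha_k$, $A_\alpha(W)=\det(w_i^{q^{\alpha_j}})_{i,j}$; for a partition $\lambda$ with at most $k$ nonzero parts, $S_\lambda(W)=A_{\lambda+\delta_k}(W)/A_{\delta_k}(W)$, $\delta_k=(k-1,\dots,0)$. $E_r(W)=S_{(1^r)}(W)$ for $0\le r\le k$, $E_r(W)=0$ otherwise. For partitions $\lambda,\mu$ with $N=\max\{\ell(\lambda),\ell(\mu)\}$ ($\ell$ = number of nonzero parts), $T_{\lambda/\mu}(W)=\det\big((-1)^{\lambda_i-\mu_j-i+j}\varphi^{\lambda_i-i}E_{\lambda_i-\mu_j-i+j}(W)\big)_{1\le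 i,j\le N}$. $|\mu|$ is the sum of the parts of $\mu$, and $\mu\subseteq\lambda$ means $\mu_i\le\lambda_i$ for all $i$. *)

theory Defs
  imports "HOL-Library.Poly_Mapping" "HOL-Library.Cardinality" "Jordan_Normal_Form.Determinant"
begin

text \<open>The ring containing hat S: finitely supported F_q-linear combinations of monomials
  x^a with a :: nat =>0 rat (rational exponents). The variable x_(i+1) is X i (0-based).
  The base field F_q is a finite field type 'a, q = CARD('a).\<close>

type_synonym 'a hatS = "(nat \<Rightarrow>\<^sub>0 rat) \<Rightarrow>\<^sub>0 'a"

definition X :: "nat \<Rightarrow> 'a::{field,finite} hatS" where
  "X i = Poly_Mapping.single (Poly_Mapping.single i (1::rat)) 1"

definition frob_int :: "int \<Rightarrow> 'a::{field,finite} hatS \<Rightarrow> 'a hatS" where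
  "frob_int e u = (if 0 \<le> e then u ^ (CARD('a) ^ nat e)
                   else (THE v. v ^ (CARD('a) ^ nat (- e)) = u))"

text \<open>A_alpha(W) for W with basis w_1..w_k (stored 0-based as w 0 .. w (k-1)),
  alpha stored 0-based: alpha j = alpha_(j+1).\<close>
definition A_det :: "nat \<Rightarrow> (nat \<Rightarrow> 'a::{field,finite} hatS) \<Rightarrow> (nat \<Rightarrow> nat) \<Rightarrow> 'a hatS" where
  "A_det k w \<alpha> = det (mat k k (\<lambda>(i, j). w i ^ (CARD('a) ^ \<alpha> j)))"

definition delta :: "nat \<Rightarrow> nat \<Rightarrow> nat" where
  "delta k j = k - 1 - j"

text \<open>S_lambda(W) = A_(lambda+delta)(W) / A_delta(W) (exact quotient); lambda 0-based.\<close>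
definition schurW :: "nat \<Rightarrow> (nat \<Rightarrow> 'a::{field,finite} hatS) \<Rightarrow> (nat \<Rightarrow> nat) \<Rightarrow> 'a hatS" where
  "schurW k w lam = (THE u. u * A_det k w (delta k) = A_det k w (\<lambda>j. lam j + delta k j))"

definition E_W :: "nat \<Rightarrow> (nat \<Rightarrow> 'a::{field,finite} hatS) \<Rightarrow> int \<Rightarrow> 'a hatS" where
  "E_W k w r = (if 0 \<le> r \<and> r \<le> int k then schurW k w (\<lambda>i. if i < nat r then 1 else 0) else 0)"

text \<open>Partitions are stored 0-based: lam i = lambda_(i+1).\<close>
definition is_partition :: "(nat \<Rightarrow> nat) \<Rightarrow> bool" where
  "is_partition lam \<longleftrightarrow> (\<forall>i. lam (Suc i) \<le> lam i) \<and> finite {i. lam i \<noteq> 0}"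

definition plen :: "(nat \<Rightarrow> nat) \<Rightarrow> nat" where
  "plen lam = card {i. lam i \<noteq> 0}"

definition psize :: "(nat \<Rightarrow> nat) \<Rightarrow> nat" where
  "psize lam = (\<Sum>i\<in>{i. lam i \<noteq> 0}. lam i)"

text \<open>Conjugate partition, 1-based argument: conj_part lam j = lambda'_j = #{i. lambda_i >= j}.\<close>
definition conj_part :: "(nat \<Rightarrow> nat) \<Rightarrow> nat \<Rightarrow> nat" where
  "conj_part lam j = card {i. j \<le> lam i}"

definition subpart :: "(nat \<Rightarrow> nat) \<Rightarrow> (nat \<Rightarrow> nat) \<Rightarrow> bool" where
  "subpart mu lam \<longleftrightarrow> (\<forall>i. mu i \<le> lam i)"

text \<open>T_(lambda/mu)(W); matrix indices 0-based, paper index = index + 1.\<close>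
definition T_W :: "nat \<Rightarrow> (nat \<Rightarrow> 'a::{field,finite} hatS) \<Rightarrow> (nat \<Rightarrow> nat) \<Rightarrow> (nat \<Rightarrow> nat) \<Rightarrow> 'a hatS" where
  "T_W k w lam mu = (let N = max (plen lam) (plen mu) in
     det (mat N N (\<lambda>(i, j).
       let r = int (lam i) - int (mu j) - int (i + 1) + int (j + 1) in
       (-1) ^ nat \<bar>r\<bar> * frob_int (int (lam i) - int (i + 1)) (E_W k w r))))"

end

theory Submission
  imports Defs "HOL-Computational_Algebra.Primes"
begin

section \<open>Finite field facts\<close>

lemma ff_power_card:
  fixes x :: "'a::{field,finite}"
  shows "x ^ CARD('a) = x"
proof (cases "x = 0")
  case False
  have "x * (\<Prod>y\<in>UNIV-{0}. x * y) = x * x ^ (card (UNIV :: 'a set) - 1) * \<Prod>(UNIV-{0})"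
    by (simp add: prod.distrib mult_ac)
  also have "x * x ^ (card (UNIV :: 'a set) - 1) = x ^ Suc (card (UNIV :: 'a set) - 1)"
    by (subst power_Suc) auto
  also have "Suc (card (UNIV :: 'a set) - 1) = card (UNIV :: 'a set)"
    using finite_UNIV_card_ge_0[where ?'a = 'a] by simp
  also have "(\<Prod>y\<in>UNIV-{0}. x * y) = (\<Prod>y\<in>UNIV-{0}. y)"
    by (rule prod.reindex_bij_witness[of _ "\<lambda>y. y / x" "\<lambda>y. x * y"]) (use False in auto)
  finally show ?thesis
    by simp
qed (use finite_UNIV_card_ge_0[where ?'a = 'a] in auto)

lemma ff_power_card_pow:
  fixes x :: "'a::{field,finite}"
  shows "x ^ (CARD('a) ^ k) = x"
  by (induction k) (simp_all add: ff_power_card power_mult)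

lemma ff_card_ge2: "CARD('a::{field,finite}) \<ge> 2"
proof -
  have "{0::'a, 1} \<subseteq> UNIV" by auto
  hence "card {0::'a, 1} \<le> CARD('a)" by (intro card_mono) auto
  thus ?thesis by simp
qed

lemma ff_power_card_minus1:
  fixes x :: "'a::{field,finite}"
  assumes "x \<noteq> 0"
  shows "x ^ (CARD('a) - 1) = 1"
proof -
  have "x * x ^ (CARD('a) - 1) = x ^ CARD('a)"
    using ff_card_ge2[where 'a='a] by (metis Suc_diff_1 not_numeral_le_zero not_gr_zero power_Suc)
  also have "\<dots> = x * 1" by (simp add: ff_power_card)
  finally show ?thesis using assms by simp
qed

lemma ff_char_prime: "prime CHAR('a::{field,finite})"
  by (rule prime_CHAR_semidom) (rule finite_imp_CHAR_pos, simp)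

definition addclosed :: "'a::{field,finite} set \<Rightarrow> bool" where
  "addclosed T \<longleftrightarrow> 0 \<in> T \<and> (\<forall>x\<in>T. \<forall>y\<in>T. x + y \<in> T)"

lemma addclosed_mult:
  assumes "addclosed T" "x \<in> T" shows "of_nat k * x \<in> T"
  using assms by (induction k) (auto simp: addclosed_def distrib_right)

lemma addclosed_neg:
  assumes "addclosed (T :: 'a::{field,finite} set)" "x \<in> T" shows "- x \<in> T"
proof -
  let ?p = "CHAR('a)"
  have p: "?p \<ge> 1" using prime_gt_0_nat[OF ff_char_prime[where 'a='a]] by simp
  have "of_nat ?p * x = 0" by simp
  moreover have "of_nat ?p = (of_nat (?p - 1) + 1 :: 'a)" using p
    by (metis Suc_diff_1 add.commute less_le_trans less_numeral_extra(1) nat_le_linear not_less of_nat_Suc)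
  ultimately have e: "(of_nat (?p - 1) + 1 :: 'a) = 0" by simp
  have "of_nat (?p - 1) * x + x = (of_nat (?p-1) + 1) * x" by (simp add: distrib_right)
  also have "\<dots> = 0" using e by simp
  finally have "of_nat (?p - 1) * x + x = 0" .
  hence "of_nat (?p - 1) * x = - x" by (simp only: eq_neg_iff_add_eq_0)
  hence "- x = of_nat (?p - 1) * x" by simp
  thus ?thesis using addclosed_mult[OF assms] by simp
qed

lemma of_nat_mod_char: "(of_nat (k mod CHAR('a)) :: 'a::semiring_1) = of_nat k"
proof -
  have "k = k mod CHAR('a) + CHAR('a) * (k div CHAR('a))" by simp
  hence "(of_nat k :: 'a) = of_nat (k mod CHAR('a)) + of_nat CHAR('a) * of_nat (k div CHAR('a))"
    by (metis of_nat_add of_nat_mult)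
  thus ?thesis by simp
qed

lemma addclosed_ext:
  fixes T :: "'a::{field,finite} set"
  assumes T: "addclosed T" and g: "g \<notin> T"
  defines "T' \<equiv> (\<lambda>(t,i). t + of_nat i * g) ` (T \<times> {..<CHAR('a)})"
  shows "addclosed T'" "card T' = card T * CHAR('a)" "g \<in> T'" "T \<subseteq> T'"
proof -
  let ?p = "CHAR('a)"
  have pp: "prime ?p" by (rule ff_char_prime)
  hence p1: "?p > 1" using prime_gt_1_nat[OF pp] by simp
  show "addclosed T'"
    unfolding addclosed_def
  proof (intro conjI ballI)
    have "(0::'a) = (\<lambda>(t,i). t + of_nat i * g) (0,0)" by simp
    moreover have "(0::'a,0::nat) \<in> T \<times> {..<?p}" using T p1 by (simp add: addclosed_def)
    ultimately show "0 \<in> T'" unfolding T'_def by (rule rev_image_eqI[rotated])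
    fix x y assume "x \<in> T'" "y \<in> T'"
    then obtain t i t' j where x: "x = t + of_nat i * g" and y: "y = t' + of_nat j * g"
      and tt: "t \<in> T" "t' \<in> T" unfolding T'_def by auto
    have "x + y = (t + t') + of_nat ((i + j) mod ?p) * g"
      unfolding x y of_nat_mod_char by (simp add: algebra_simps)
    moreover have "t + t' \<in> T" using T tt by (auto simp: addclosed_def)
    moreover have "(i + j) mod ?p < ?p" using p1 by simp
    ultimately show "x + y \<in> T'" unfolding T'_def by (force simp: image_iff)
  qed
  show "g \<in> T'" unfolding T'_def using T p1
    by (force simp: addclosed_def image_iff intro!: bexI[of _ "(0,1)"])
  show "T \<subseteq> T'"
  proof
    fix t assume "t \<in> T"
    hence "(t, 0) \<in> T \<times> {..<?p}" using p1 by simp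
    moreover have "t = (\<lambda>(t,i). t + of_nat i * g) (t, 0)" by simp
    ultimately show "t \<in> T'" unfolding T'_def by (rule rev_image_eqI)
  qed
  have key: "i = j" if "t \<in> T" "t' \<in> T" "i < ?p" "j < ?p" "i \<le> j"
      "t + of_nat i * g = t' + of_nat j * g" for t t' i j
  proof (rule ccontr)
    assume "i \<noteq> j"
    define d where "d = j - i"
    have d: "0 < d" "d < ?p" using that \<open>i \<noteq> j\<close> unfolding d_def by auto
    have "of_nat d * g = t - t'"
      using that(5,6) unfolding d_def by (simp add: of_nat_diff algebra_simps)
    moreover have "t + (- t') \<in> T" using T that(1) addclosed_neg[OF T that(2)]
      unfolding addclosed_def by blast
    hence "t - t' \<in> T" by simp
    ultimately have dg: "of_nat d * g \<in> T" by simp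
    have dn0: "(of_nat d :: 'a) \<noteq> 0"
    proof
      assume "(of_nat d :: 'a) = 0"
      hence "?p dvd d" by (simp add: of_nat_eq_0_iff_char_dvd)
      with d show False by (meson dvd_imp_le not_le)
    qed
    have c2: "CARD('a) \<ge> 2" by (rule ff_card_ge2)
    have "(of_nat d :: 'a) ^ (CARD('a) - 2) * of_nat d = of_nat d ^ (CARD('a) - 1)"
      using c2 by (metis Suc_diff_Suc Suc_1 diff_Suc_1 less_le_trans numeral_2_eq_2 power_Suc2 lessI)
    also have "\<dots> = 1" using ff_power_card_minus1[OF dn0] .
    finally have inv: "(of_nat (d ^ (CARD('a) - 2)) :: 'a) * of_nat d = 1" by simp
    have "of_nat (d ^ (CARD('a) - 2)) * (of_nat d * g) \<in> T"
      by (rule addclosed_mult[OF T dg])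
    moreover have "of_nat (d ^ (CARD('a) - 2)) * (of_nat d * g) = g"
      by (simp only: mult.assoc[symmetric] inv mult_1_left)
    ultimately have "g \<in> T" by metis
    with g show False by simp
  qed
  have inj: "inj_on (\<lambda>(t,i). t + of_nat i * g) (T \<times> {..<?p})"
  proof (rule inj_onI, clarsimp)
    fix t i t' j assume *: "t \<in> T" "i < ?p" "t' \<in> T" "j < ?p" "t + of_nat i * g = t' + of_nat j * g"
    have "i = j"
    proof (cases "i \<le> j")
      case True thus ?thesis using key * by blast
    next
      case False thus ?thesis using key[of t' t j i] * by auto
    qed
    with * show "t = t' \<and> i = j" by simp
  qed
  show "card T' = card T * ?p"
    unfolding T'_def card_image[OF inj] by (simp add: card_cartesian_product)
qed

lemma addclosed_card:
  fixes T :: "'a::{field,finite} set"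
  assumes "addclosed T"
  shows "\<exists>k. CARD('a) = card T * CHAR('a) ^ k"
  using assms
proof (induction "card (UNIV - T)" arbitrary: T rule: less_induct)
  case less
  show ?case
  proof (cases "T = UNIV")
    case True thus ?thesis by (intro exI[of _ 0]) simp
  next
    case False
    then obtain g where g: "g \<notin> T" by auto
    define T' where "T' \<equiv> (\<lambda>(t,i). t + of_nat i * g) ` (T \<times> {..<CHAR('a)})"
    note ext = addclosed_ext[OF less.prems g, folded T'_def]
    have "card (UNIV - T') < card (UNIV - T)"
      using ext(3,4) g by (intro psubset_card_mono) auto
    from less.hyps[OF this ext(1)] obtain k where "CARD('a) = card T' * CHAR('a) ^ k" by blast
    hence "CARD('a) = card T * CHAR('a) ^ Suc k" using ext(2) by simp
    thus ?thesis by blast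
  qed
qed

lemma ff_card_prime_pow: "\<exists>k. CARD('a::{field,finite}) = CHAR('a) ^ k"
proof -
  have "addclosed {0::'a}" by (simp add: addclosed_def)
  from addclosed_card[OF this] show ?thesis by simp
qed

section \<open>Frobenius on hatS\<close>

lemma CHAR_hatS: "CHAR('a::{field,finite} hatS) = CHAR('a)"
proof (rule CHAR_eqI)
  show "of_nat CHAR('a) = (0 :: 'a hatS)"
    by (metis of_nat_CHAR single_of_nat single_zero)
  fix x assume "of_nat x = (0 :: 'a hatS)"
  have "Poly_Mapping.single 0 (of_nat x :: 'a) = (of_nat x :: 'a hatS)" by (rule single_of_nat)
  also have "\<dots> = 0" by fact
  finally have "(Poly_Mapping.single 0 (of_nat x :: 'a) :: 'a hatS) = 0" .
  hence "Poly_Mapping.lookup (Poly_Mapping.single 0 (of_nat x :: 'a) :: 'a hatS) 0 = 0" by simp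
  hence "(of_nat x :: 'a) = 0" by (simp only: lookup_single_eq)
  thus "CHAR('a) dvd x" by (simp add: of_nat_eq_0_iff_char_dvd)
qed

lemma frob_add:
  fixes x y :: "'a::{field,finite} hatS"
  shows "(x + y) ^ (CARD('a) ^ e) = x ^ (CARD('a) ^ e) + y ^ (CARD('a) ^ e)"
proof -
  obtain k where k: "CARD('a) = CHAR('a) ^ k" using ff_card_prime_pow by blast
  have "CARD('a) ^ e = CHAR('a hatS) ^ (k * e)" unfolding k CHAR_hatS by (simp add: power_mult)
  moreover have "prime CHAR('a hatS)" unfolding CHAR_hatS by (rule ff_char_prime)
  ultimately show ?thesis by (intro freshmans_dream') auto
qed

lemma frob_sum:
  fixes f :: "'b \<Rightarrow> 'a::{field,finite} hatS"
  shows "(sum f A) ^ (CARD('a) ^ e) = (\<Sum>i\<in>A. f i ^ (CARD('a) ^ e))"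
  by (induction A rule: infinite_finite_induct) (simp_all add: frob_add)

definition scal :: "rat \<Rightarrow> (nat \<Rightarrow>\<^sub>0 rat) \<Rightarrow> (nat \<Rightarrow>\<^sub>0 rat)" where
  "scal c a = Poly_Mapping.map ((*) c) a"

lemma lookup_scal[simp]: "Poly_Mapping.lookup (scal c a) i = c * Poly_Mapping.lookup a i"
  by (simp add: scal_def map.rep_eq when_def)

lemma scal_scal[simp]: "scal c (scal d a) = scal (c*d) a"
  by (rule poly_mapping_eqI) simp

lemma scal_1[simp]: "scal 1 a = a"
  by (rule poly_mapping_eqI) simp

lemma scal_0[simp]: "scal c 0 = 0"
  by (rule poly_mapping_eqI) simp

lemma scal_0'[simp]: "scal 0 a = 0"
  by (rule poly_mapping_eqI) simp

lemma scal_add: "scal c (a + b) = scal c a + scal c b"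
  by (rule poly_mapping_eqI) (simp add: lookup_add distrib_left)

lemma scal_single: "scal c (Poly_Mapping.single i r) = Poly_Mapping.single i (c * r)"
  by (rule poly_mapping_eqI) (simp add: lookup_single when_def)

lemma scal_inv: "c \<noteq> 0 \<Longrightarrow> scal (inverse c) (scal c a) = a"
  by simp

lemma inj_scal: "c \<noteq> 0 \<Longrightarrow> inj (scal c)"
  by (metis inj_on_inverseI scal_inv)

lemma scal_eq_iff: "c \<noteq> 0 \<Longrightarrow> (scal c a = b) \<longleftrightarrow> (a = scal (inverse c) b)"
  by (auto simp: scal_inv)

definition sc :: "rat \<Rightarrow> ((nat \<Rightarrow>\<^sub>0 rat) \<Rightarrow>\<^sub>0 'b::zero) \<Rightarrow> ((nat \<Rightarrow>\<^sub>0 rat) \<Rightarrow>\<^sub>0 'b)" where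
  "sc t u = Poly_Mapping.map_key (scal (inverse t)) u"

lemma lookup_sc: "t \<noteq> 0 \<Longrightarrow> Poly_Mapping.lookup (sc t u) a = Poly_Mapping.lookup u (scal (inverse t) a)"
  unfolding sc_def by (simp add: map_key.rep_eq inj_scal)

lemma sc_add: "t \<noteq> 0 \<Longrightarrow> sc t (u + v) = sc t u + sc t v"
  by (rule poly_mapping_eqI) (simp add: lookup_sc lookup_add)

lemma sc_zero[simp]: "t \<noteq> 0 \<Longrightarrow> sc t 0 = 0"
  by (rule poly_mapping_eqI) (simp add: lookup_sc)

lemma sc_uminus: "t \<noteq> 0 \<Longrightarrow> sc t (- u) = - sc t (u :: (_ \<Rightarrow>\<^sub>0 'b::ab_group_add))"
  by (rule poly_mapping_eqI) (simp add: lookup_sc)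

lemma sc_diff: "t \<noteq> 0 \<Longrightarrow> sc t (u - v) = sc t u - sc t (v :: (_ \<Rightarrow>\<^sub>0 'b::ab_group_add))"
  by (rule poly_mapping_eqI) (simp add: lookup_sc lookup_minus)

lemma sc_single: "t \<noteq> 0 \<Longrightarrow> sc t (Poly_Mapping.single a c) = Poly_Mapping.single (scal t a) c"
  by (rule poly_mapping_eqI) (auto simp add: lookup_sc lookup_single when_def scal_eq_iff)

lemma sc_sc: "s \<noteq> 0 \<Longrightarrow> t \<noteq> 0 \<Longrightarrow> sc s (sc t u) = sc (s * t) u"
  by (rule poly_mapping_eqI) (simp add: lookup_sc mult.commute)

lemma sc_1[simp]: "sc 1 u = u"
  by (rule poly_mapping_eqI) (simp add: lookup_sc)

lemma sc_sum: "t \<noteq> 0 \<Longrightarrow> sc t (sum f A) = (\<Sum>i\<in>A. sc t (f i))"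
  by (induction A rule: infinite_finite_induct) (simp_all add: sc_add)

lemma pm_expand: "u = (\<Sum>k\<in>Poly_Mapping.keys u. Poly_Mapping.single k (Poly_Mapping.lookup u k))"
proof (rule poly_mapping_eqI)
  fix x
  have "Poly_Mapping.lookup (\<Sum>k\<in>Poly_Mapping.keys u. Poly_Mapping.single k (Poly_Mapping.lookup u k)) x
      = (\<Sum>k\<in>Poly_Mapping.keys u. if k = x then Poly_Mapping.lookup u k else 0)"
    by (simp add: lookup_sum lookup_single when_def)
  also have "\<dots> = Poly_Mapping.lookup u x"
    by (simp add: in_keys_iff)
  finally show "Poly_Mapping.lookup u x = Poly_Mapping.lookup (\<Sum>k\<in>Poly_Mapping.keys u. Poly_Mapping.single k (Poly_Mapping.lookup u k)) x" ..
qed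

lemma pm_mult_expand:
  fixes u v :: "(nat \<Rightarrow>\<^sub>0 rat) \<Rightarrow>\<^sub>0 'b::comm_ring_1"
  shows "u * v = (\<Sum>a\<in>Poly_Mapping.keys u. \<Sum>b\<in>Poly_Mapping.keys v.
     Poly_Mapping.single (a + b) (Poly_Mapping.lookup u a * Poly_Mapping.lookup v b))"
proof -
  have "u * v = (\<Sum>a\<in>Poly_Mapping.keys u. Poly_Mapping.single a (Poly_Mapping.lookup u a))
     * (\<Sum>b\<in>Poly_Mapping.keys v. Poly_Mapping.single b (Poly_Mapping.lookup v b))"
    by (rule arg_cong2[where f="(*)"]; rule pm_expand)
  also have "\<dots> = (\<Sum>a\<in>Poly_Mapping.keys u. \<Sum>b\<in>Poly_Mapping.keys v.
     Poly_Mapping.single a (Poly_Mapping.lookup u a) * Poly_Mapping.single b (Poly_Mapping.lookup v b))"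
    by (rule sum_product)
  finally show ?thesis by (simp add: mult_single)
qed

lemma sc_mult:
  fixes u v :: "(nat \<Rightarrow>\<^sub>0 rat) \<Rightarrow>\<^sub>0 'b::comm_ring_1"
  assumes t: "t \<noteq> 0"
  shows "sc t (u * v) = sc t u * sc t v"
proof -
  have "sc t (u * v) = (\<Sum>a\<in>Poly_Mapping.keys u. \<Sum>b\<in>Poly_Mapping.keys v.
     Poly_Mapping.single (scal t a + scal t b) (Poly_Mapping.lookup u a * Poly_Mapping.lookup v b))"
    unfolding pm_mult_expand[of u v] by (simp add: sc_sum t sc_single scal_add)
  also have "\<dots> = (\<Sum>a\<in>Poly_Mapping.keys u. \<Sum>b\<in>Poly_Mapping.keys v.
     sc t (Poly_Mapping.single a (Poly_Mapping.lookup u a)) * sc t (Poly_Mapping.single b (Poly_Mapping.lookup v b)))"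
    by (simp add: sc_single t mult_single)
  also have "\<dots> = (\<Sum>a\<in>Poly_Mapping.keys u. sc t (Poly_Mapping.single a (Poly_Mapping.lookup u a)))
     * (\<Sum>b\<in>Poly_Mapping.keys v. sc t (Poly_Mapping.single b (Poly_Mapping.lookup v b)))"
    by (rule sum_product[symmetric])
  also have "\<dots> = sc t u * sc t v"
    by (simp only: sc_sum[OF t, symmetric] pm_expand[symmetric])
  finally show ?thesis .
qed

lemma sc_one[simp]: "t \<noteq> 0 \<Longrightarrow> sc t (1 :: (nat \<Rightarrow>\<^sub>0 rat) \<Rightarrow>\<^sub>0 'b::comm_ring_1) = 1"
  by (metis sc_single scal_0 single_one)

lemma sc_power: "t \<noteq> 0 \<Longrightarrow> sc t ((u :: (nat \<Rightarrow>\<^sub>0 rat) \<Rightarrow>\<^sub>0 'b::comm_ring_1) ^ k) = (sc t u) ^ k"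
  by (induction k) (simp_all add: sc_mult)

lemma sc_neg1_power[simp]: "t \<noteq> 0 \<Longrightarrow> sc t ((- 1 :: (nat \<Rightarrow>\<^sub>0 rat) \<Rightarrow>\<^sub>0 'b::comm_ring_1) ^ k) = (- 1) ^ k"
  by (simp add: sc_power sc_uminus)

lemma single_power:
  "(Poly_Mapping.single a c :: (nat \<Rightarrow>\<^sub>0 rat) \<Rightarrow>\<^sub>0 'b::comm_ring_1) ^ k
     = Poly_Mapping.single (scal (of_nat k) a) (c ^ k)"
proof (induction k)
  case 0 thus ?case by simp
next
  case (Suc k)
  have e: "a + scal (of_nat k) a = scal (of_nat (Suc k)) a"
    by (rule poly_mapping_eqI) (simp add: lookup_add algebra_simps)
  show ?case by (simp add: Suc mult_single e)
qed

lemma frob_pow_sc: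
  fixes u :: "'a::{field,finite} hatS"
  shows "u ^ (CARD('a) ^ e) = sc (of_nat (CARD('a) ^ e)) u"
proof -
  let ?Q = "CARD('a) ^ e"
  have Q0: "(of_nat ?Q :: rat) \<noteq> 0" by simp
  have "u ^ ?Q = (\<Sum>k\<in>Poly_Mapping.keys u. Poly_Mapping.single k (Poly_Mapping.lookup u k)) ^ ?Q"
    by (rule arg_cong[where f="\<lambda>x. x ^ ?Q"], rule pm_expand)
  also have "\<dots> = (\<Sum>k\<in>Poly_Mapping.keys u. Poly_Mapping.single k (Poly_Mapping.lookup u k) ^ ?Q)"
    by (rule frob_sum)
  also have "\<dots> = (\<Sum>k\<in>Poly_Mapping.keys u. sc (of_nat ?Q) (Poly_Mapping.single k (Poly_Mapping.lookup u k)))"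
    by (simp add: single_power sc_single ff_power_card_pow)
  also have "\<dots> = sc (of_nat ?Q) u"
    by (simp only: sc_sum[OF Q0, symmetric] pm_expand[symmetric])
  finally show ?thesis .
qed

definition qpow :: "'a::{field,finite} itself \<Rightarrow> int \<Rightarrow> rat" where
  "qpow _ e = of_nat CARD('a) powi e"

lemma qpow_nz: "qpow TYPE('a::{field,finite}) e \<noteq> 0"
  unfolding qpow_def using ff_card_ge2[where 'a='a] by (simp add: power_int_eq_0_iff)

lemma qpow_add: "qpow TYPE('a::{field,finite}) (e + f) = qpow TYPE('a) e * qpow TYPE('a) f"
  unfolding qpow_def using ff_card_ge2[where 'a='a] by (simp add: power_int_add)

lemma frob_int_sc:
  fixes u :: "'a::{field,finite} hatS"
  shows "frob_int e u = sc (qpow TYPE('a) e) u"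
proof (cases "0 \<le> e")
  case True
  have "frob_int e u = u ^ (CARD('a) ^ nat e)" using True by (simp add: frob_int_def)
  also have "\<dots> = sc (of_nat (CARD('a) ^ nat e)) u" by (rule frob_pow_sc)
  also have "(of_nat (CARD('a) ^ nat e) :: rat) = qpow TYPE('a) e"
    using True by (simp add: qpow_def power_int_def)
  finally show ?thesis .
next
  case False
  let ?Q = "CARD('a) ^ nat (- e)"
  have Q0: "(of_nat ?Q :: rat) \<noteq> 0" by simp
  have iQ0: "inverse (of_nat ?Q :: rat) \<noteq> 0" by simp
  have "frob_int e u = (THE v. v ^ ?Q = u)" using False by (simp add: frob_int_def)
  also have "\<dots> = sc (inverse (of_nat ?Q)) u"
  proof (rule the_equality)
    show "sc (inverse (of_nat ?Q)) u ^ ?Q = u"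
      by (simp add: frob_pow_sc sc_sc Q0 iQ0)
    fix v assume "v ^ ?Q = u"
    hence "sc (of_nat ?Q) v = u" by (simp add: frob_pow_sc)
    hence "sc (inverse (of_nat ?Q)) (sc (of_nat ?Q) v) = sc (inverse (of_nat ?Q)) u" by simp
    thus "v = sc (inverse (of_nat ?Q)) u" by (simp add: sc_sc Q0 iQ0)
  qed
  also have "inverse (of_nat ?Q :: rat) = qpow TYPE('a) e"
    using False by (simp add: qpow_def power_int_def power_inverse)
  finally show ?thesis .
qed

context
  fixes dummy :: "'a::{field,finite}"
begin

lemma frob_add': "frob_int e (u + v :: 'a hatS) = frob_int e u + frob_int e v"
  by (simp add: frob_int_sc sc_add qpow_nz)

lemma frob_mult: "frob_int e (u * v :: 'a hatS) = frob_int e u * frob_int e v"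
  by (simp add: frob_int_sc sc_mult qpow_nz)

lemma frob_sum': "frob_int e (sum f A :: 'a hatS) = (\<Sum>i\<in>A. frob_int e (f i))"
  by (simp add: frob_int_sc sc_sum qpow_nz)

lemma frob_uminus: "frob_int e (- u :: 'a hatS) = - frob_int e u"
  by (simp add: frob_int_sc sc_uminus qpow_nz)

lemma frob_zero[simp]: "frob_int e (0 :: 'a hatS) = 0"
  by (simp add: frob_int_sc qpow_nz)

lemma frob_one[simp]: "frob_int e (1 :: 'a hatS) = 1"
  by (simp add: frob_int_sc qpow_nz)

lemma frob_neg1_power[simp]: "frob_int e ((- 1) ^ k :: 'a hatS) = (- 1) ^ k"
  by (simp add: frob_int_sc qpow_nz)

lemma frob_frob: "frob_int e (frob_int f (u :: 'a hatS)) = frob_int (e + f) u"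
  by (simp add: frob_int_sc sc_sc qpow_nz qpow_add)

lemma frob_nat: "frob_int (int k) (u :: 'a hatS) = u ^ (CARD('a) ^ k)"
  by (simp add: frob_int_def)

end

lemma X_power: "(X i :: 'a::{field,finite} hatS) ^ k = Poly_Mapping.single (Poly_Mapping.single i (of_nat k)) 1"
  unfolding X_def single_power by (simp add: scal_single)

lemma prod_single:
  "(\<Prod>i\<in>A. Poly_Mapping.single (f i) (c i) :: (nat \<Rightarrow>\<^sub>0 rat) \<Rightarrow>\<^sub>0 'b::comm_ring_1)
     = Poly_Mapping.single (\<Sum>i\<in>A. f i) (\<Prod>i\<in>A. c i)"
  by (induction A rule: infinite_finite_induct) (simp_all add: mult_single)

lemma lookup_sum_single_idx:
  assumes "j < n"
  shows "Poly_Mapping.lookup (\<Sum>i<n. Poly_Mapping.single i (r i) :: nat \<Rightarrow>\<^sub>0 rat) j = r j"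
proof -
  have "Poly_Mapping.lookup (\<Sum>i<n. Poly_Mapping.single i (r i) :: nat \<Rightarrow>\<^sub>0 rat) j
     = (\<Sum>i<n. if i = j then r i else 0)"
    by (simp add: lookup_sum lookup_single when_def)
  also have "\<dots> = r j" using assms by simp
  finally show ?thesis .
qed

lemma moore_nonzero:
  fixes \<alpha> :: "nat \<Rightarrow> nat"
  assumes inj: "inj_on \<alpha> {..<n}"
  shows "det (mat n n (\<lambda>(i,j). (X i :: 'a::{field,finite} hatS) ^ (CARD('a) ^ \<alpha> j))) \<noteq> 0"
proof -
  let ?q = "CARD('a)"
  let ?M = "mat n n (\<lambda>(i,j). (X i :: 'a hatS) ^ (?q ^ \<alpha> j))"
  define k where "k p = (\<Sum>i<n. Poly_Mapping.single i (of_nat (?q ^ \<alpha> (p i)) :: rat))" for p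
  have q2: "?q \<ge> 2" by (rule ff_card_ge2)
  have "det ?M = (\<Sum>p\<in>{p. p permutes {0..<n}}. signof p * (\<Prod>i=0..<n. ?M $$ (i, p i)))"
    by (rule det_def') simp
  also have "\<dots> = (\<Sum>p\<in>{p. p permutes {0..<n}}. Poly_Mapping.single (k p) (of_int (sign p)))"
  proof (rule sum.cong[OF refl])
    fix p assume p: "p \<in> {p. p permutes {0..<n}}"
    have pi: "i < n \<Longrightarrow> p i < n" for i using p by (auto dest: permutes_in_image)
    have "(\<Prod>i=0..<n. ?M $$ (i, p i)) = (\<Prod>i=0..<n. Poly_Mapping.single (Poly_Mapping.single i (of_nat (?q ^ \<alpha> (p i)))) 1)"
      using pi by (intro prod.cong) (auto simp: X_power)
    also have "\<dots> = Poly_Mapping.single (k p) 1"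
      by (simp add: prod_single k_def atLeast0LessThan)
    finally show "signof p * (\<Prod>i=0..<n. ?M $$ (i, p i)) = Poly_Mapping.single (k p) (of_int (sign p))"
      by (simp add: mult_single flip: single_of_int)
  qed
  finally have d: "det ?M = (\<Sum>p\<in>{p. p permutes {0..<n}}. Poly_Mapping.single (k p) (of_int (sign p)))" .
  have keq: "k p = k id \<longleftrightarrow> p = id" if p: "p permutes {0..<n}" for p
  proof
    assume "k p = k id"
    hence "\<forall>i<n. p i = i"
    proof (intro allI impI)
      fix i assume i: "i < n"
      have "Poly_Mapping.lookup (k p) i = Poly_Mapping.lookup (k id) i" using \<open>k p = k id\<close> by simp
      hence "(of_nat (?q ^ \<alpha> (p i)) :: rat) = of_nat (?q ^ \<alpha> i)"
        unfolding k_def using i by (simp add: lookup_sum_single_idx)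
      hence "?q ^ \<alpha> (p i) = ?q ^ \<alpha> i" by (simp only: of_nat_eq_iff)
      hence "\<alpha> (p i) = \<alpha> i" using q2 by (simp add: power_inject_exp)
      moreover have "p i < n" using p i by (auto dest: permutes_in_image)
      ultimately show "p i = i" using inj i by (auto dest: inj_onD)
    qed
    thus "p = id" using p by (auto simp: permutes_def fun_eq_iff)
  qed simp
  have "Poly_Mapping.lookup (det ?M) (k id) = (\<Sum>p\<in>{p. p permutes {0..<n}}. if p = id then 1 else 0)"
    unfolding d lookup_sum
    by (intro sum.cong refl) (auto simp: lookup_single when_def keq sign_id)
  also have "\<dots> = 1" by (subst sum.delta) (simp_all add: finite_permutations permutes_id)
  finally show ?thesis by auto
qed

lemma A_delta_nonzero: "A_det n (X :: nat \<Rightarrow> 'a::{field,finite} hatS) (delta n) \<noteq> 0"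
  unfolding A_det_def
  by (rule moore_nonzero) (auto simp: delta_def inj_on_def)

lemma schurW_eq:
  assumes "A_det k w (delta k) \<noteq> 0" "u * A_det k w (delta k) = A_det k w (\<lambda>j. lam j + delta k j)"
  shows "schurW k w lam = u"
  unfolding schurW_def
proof (rule the_equality)
  show "u * A_det k w (delta k) = A_det k w (\<lambda>j. lam j + delta k j)" by (rule assms(2))
  fix v assume "v * A_det k w (delta k) = A_det k w (\<lambda>j. lam j + delta k j)"
  with assms(2) have "v * A_det k w (delta k) = u * A_det k w (delta k)" by simp
  with assms(1) show "v = u" by (simp add: mult_right_cancel)
qed

definition qev :: "(nat \<Rightarrow> 'a::{field,finite} hatS) \<Rightarrow> nat \<Rightarrow> 'a hatS \<Rightarrow> 'a hatS" where
  "qev c K t = (\<Sum>s\<le>K. c s * t ^ (CARD('a) ^ s))"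

primrec coef :: "nat \<Rightarrow> nat \<Rightarrow> 'a::{field,finite} hatS" where
  "coef 0 = (\<lambda>s. if s = 0 then 1 else 0)"
| "coef (Suc k) = (\<lambda>s. (if s = 0 then 0 else coef k (s - 1) ^ CARD('a))
      - qev (coef k) k (X k) ^ (CARD('a) - 1) * coef k s)"

lemma card_pos': "CARD('a::{field,finite}) > 0"
  using ff_card_ge2[where 'a='a] by simp

lemma coef_high: "k < s \<Longrightarrow> (coef k s :: 'a::{field,finite} hatS) = 0"
proof (induction k arbitrary: s)
  case 0 thus ?case by simp
next
  case (Suc k)
  hence "coef k (s - 1) = (0 :: 'a hatS)" "coef k s = (0 :: 'a hatS)" by auto
  thus ?case using Suc.prems card_pos'[where 'a='a] by simp
qed

lemma coef_top: "(coef k k :: 'a::{field,finite} hatS) = 1"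
proof (induction k)
  case 0 thus ?case by simp
next
  case (Suc k)
  thus ?case by (simp add: coef_high)
qed

lemma qev_Suc:
  "qev (coef (Suc k)) (Suc k) (t :: 'a::{field,finite} hatS)
     = qev (coef k) k t ^ CARD('a) - qev (coef k) k (X k) ^ (CARD('a) - 1) * qev (coef k) k t"
proof -
  let ?q = "CARD('a)"
  define c where "c = qev (coef k) k (X k :: 'a hatS) ^ (?q - 1)"
  have cs: "coef (Suc k) s = (if s = 0 then 0 else coef k (s - 1) ^ ?q) - c * coef k s" for s
    by (simp add: c_def)
  have "qev (coef (Suc k)) (Suc k) t
      = (\<Sum>s\<le>Suc k. ((if s = 0 then 0 else coef k (s - 1) ^ ?q) - c * coef k s) * t ^ (?q ^ s))"
    by (simp only: qev_def cs)
  also have "\<dots> = (\<Sum>s\<le>Suc k. (if s = 0 then 0 else coef k (s - 1) ^ ?q) * t ^ (?q ^ s))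
        - c * (\<Sum>s\<le>Suc k. coef k s * t ^ (?q ^ s))"
    by (simp add: algebra_simps sum_subtractf sum_distrib_left)
  also have "(\<Sum>s\<le>Suc k. (if s = 0 then 0 else coef k (s - 1) ^ ?q) * t ^ (?q ^ s))
      = (\<Sum>s\<le>k. coef k s ^ ?q * t ^ (?q ^ Suc s))"
    by (subst sum.atMost_Suc_shift) simp
  also have "\<dots> = (\<Sum>s\<le>k. (coef k s * t ^ (?q ^ s)) ^ ?q)"
    by (intro sum.cong refl) (simp add: power_mult_distrib power_mult[symmetric] mult.commute)
  also have "\<dots> = qev (coef k) k t ^ ?q"
    unfolding qev_def using frob_sum[where e=1 and A="{..k}" and f="\<lambda>s. coef k s * t ^ (?q ^ s)"]
    by simp
  also have "(\<Sum>s\<le>Suc k. coef k s * t ^ (?q ^ s)) = qev (coef k) k t"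
    unfolding qev_def by (simp add: coef_high)
  finally show ?thesis unfolding c_def .
qed

lemma qev_root: "i < k \<Longrightarrow> qev (coef k) k (X i :: 'a::{field,finite} hatS) = 0"
proof (induction k arbitrary: i)
  case 0 thus ?case by simp
next
  case (Suc k)
  let ?q = "CARD('a)"
  have q: "?q = Suc (?q - 1)" using card_pos'[where 'a='a] by simp
  show ?case
  proof (cases "i < k")
    case True
    thus ?thesis unfolding qev_Suc using Suc.IH card_pos'[where 'a='a] by simp
  next
    case False
    hence "i = k" using Suc.prems by simp
    have "qev (coef k) k (X k :: 'a hatS) ^ ?q = qev (coef k) k (X k) ^ Suc (?q - 1)"
      using q by metis
    also have "\<dots> = qev (coef k) k (X k) ^ (?q - 1) * qev (coef k) k (X k)"
      by (rule power_Suc2)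
    finally have e: "qev (coef k) k (X k :: 'a hatS) ^ ?q
       = qev (coef k) k (X k) ^ (?q - 1) * qev (coef k) k (X k)" .
    show ?thesis by (simp only: qev_Suc \<open>i = k\<close> e diff_self)
  qed
qed

lemma coef_relation:
  assumes "i < n"
  shows "(\<Sum>s\<le>n. coef n s * (X i :: 'a::{field,finite} hatS) ^ (CARD('a) ^ s)) = 0"
  using qev_root[OF assms] unfolding qev_def .

lemma coef_relation':
  assumes "i < n"
  shows "(X i :: 'a::{field,finite} hatS) ^ (CARD('a) ^ n)
       = - (\<Sum>s<n. coef n s * X i ^ (CARD('a) ^ s))"
proof -
  have "(\<Sum>s\<le>n. coef n s * (X i :: 'a hatS) ^ (CARD('a) ^ s))
     = (\<Sum>s<n. coef n s * X i ^ (CARD('a) ^ s)) + X i ^ (CARD('a) ^ n)"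
    by (simp add: lessThan_Suc_atMost[symmetric] coef_top)
  with coef_relation[OF assms, where 'a='a] show ?thesis by (simp add: eq_neg_iff_add_eq_0 add.commute)
qed

lemma A_det_shift:
  assumes r: "1 \<le> r" "r \<le> n"
  shows "A_det n (X :: nat \<Rightarrow> 'a::{field,finite} hatS) (\<lambda>j. (if j < r then 1 else 0) + delta n j)
     = (- 1) ^ r * coef n (n - r) * A_det n X (delta n)"
proof -
  let ?q = "CARD('a)"
  define M where "M = mat n n (\<lambda>(i,j). (X i :: 'a hatS) ^ (?q ^ delta n j))"
  define x where "x = vec n (\<lambda>j. - coef n (delta n j) :: 'a hatS)"
  have M: "M \<in> carrier_mat n n" unfolding M_def by simp
  have x: "x \<in> carrier_vec n" unfolding x_def by simp
  have Mx: "M *\<^sub>v x = vec n (\<lambda>i. X i ^ (?q ^ n))"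
  proof (rule eq_vecI)
    fix i assume i: "i < dim_vec (vec n (\<lambda>i. (X i :: 'a hatS) ^ (?q ^ n)))"
    hence i: "i < n" by simp
    have "(M *\<^sub>v x) $ i = (\<Sum>j<n. X i ^ (?q ^ (n - Suc j)) * (- coef n (n - Suc j)))"
      using i unfolding M_def x_def
      by (simp add: mult_mat_vec_def scalar_prod_def delta_def atLeast0LessThan)
    also have "\<dots> = (\<Sum>s<n. X i ^ (?q ^ s) * (- coef n s))"
      by (rule sum.nat_diff_reindex)
    also have "\<dots> = X i ^ (?q ^ n)"
      using coef_relation'[OF i, where 'a='a] by (simp add: sum_negf mult.commute)
    finally show "(M *\<^sub>v x) $ i = vec n (\<lambda>i. X i ^ (?q ^ n)) $ i" using i by simp
  qed (simp add: M_def)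
  define R where "R = replace_col M (M *\<^sub>v x) (r - 1)"
  have R: "R \<in> carrier_mat n n" unfolding R_def replace_col_def using M by simp
  have "det R = x $ (r - 1) * det M"
    unfolding R_def by (rule cramer_lemma_mat[OF M x]) (use r in simp)
  also have "x $ (r - 1) = - coef n (n - r)"
  proof -
    have "n - Suc (r - Suc 0) = n - r" using r by simp
    thus ?thesis unfolding x_def using r by (simp add: delta_def)
  qed
  finally have dR: "det R = - coef n (n - r) * det M" .
  have "det (swap_col_to_front R (r - 1)) = (- 1) ^ (r - 1) * det R"
    by (rule swap_col_to_front_det[OF R]) (use r in simp)
  moreover have "swap_col_to_front R (r - 1)
      = mat n n (\<lambda>(i,j). X i ^ (?q ^ ((if j < r then 1 else 0) + delta n j)))"
  proof -
    have "swap_col_to_front R (r - 1) = mat n n (\<lambda> (i,j). if j = 0 then R $$ (i,r - 1)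
      else if j \<le> r - 1 then R $$ (i, j-1) else R $$ (i,j))"
      by (rule swap_col_to_front_result[OF R]) (use r in simp)
    also have "\<dots> = mat n n (\<lambda>(i,j). X i ^ (?q ^ ((if j < r then 1 else 0) + delta n j)))"
    proof (rule eq_matI)
      fix i j assume ij: "i < dim_row (mat n n (\<lambda>(i,j). (X i :: 'a hatS) ^ (?q ^ ((if j < r then 1 else 0) + delta n j))))"
        "j < dim_col (mat n n (\<lambda>(i,j). (X i :: 'a hatS) ^ (?q ^ ((if j < r then 1 else 0) + delta n j))))"
      hence i: "i < n" and j: "j < n" by auto
      have Ri: "R $$ (i, j') = (if j' = r - 1 then X i ^ (?q ^ n) else X i ^ (?q ^ delta n j'))" if "j' < n" for j'
        unfolding R_def replace_col_def using i that M Mx by (simp add: M_def)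
      show "mat n n (\<lambda>(i,j). if j = 0 then R $$ (i,r - 1)
        else if j \<le> r - 1 then R $$ (i, j-1) else R $$ (i,j)) $$ (i, j) =
        mat n n (\<lambda>(i,j). (X i :: 'a hatS) ^ (?q ^ ((if j < r then 1 else 0) + delta n j))) $$ (i, j)"
        using i j r by (auto simp: Ri delta_def)
    qed auto
    finally show ?thesis .
  qed
  ultimately have "A_det n X (\<lambda>j. (if j < r then 1 else 0) + delta n j) = (- 1) ^ (r - 1) * det R"
    unfolding A_det_def by simp
  also have "\<dots> = (- 1) ^ r * coef n (n - r) * A_det n X (delta n)"
    unfolding dR A_det_def M_def[symmetric] using r
    by (cases r) auto
  finally show ?thesis .
qed

lemma E_W_coef:
  assumes "r \<le> n"
  shows "E_W n (X :: nat \<Rightarrow> 'a::{field,finite} hatS) (int r) = (- 1) ^ r * coef n (n - r)"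
proof -
  have "E_W n (X :: nat \<Rightarrow> 'a hatS) (int r) = schurW n X (\<lambda>i. if i < r then 1 else 0)"
    using assms by (simp add: E_W_def)
  also have "\<dots> = (- 1) ^ r * coef n (n - r)"
  proof (rule schurW_eq[OF A_delta_nonzero])
    show "(- 1) ^ r * coef n (n - r) * A_det n X (delta n)
        = A_det n (X :: nat \<Rightarrow> 'a hatS) (\<lambda>j. (if j < r then 1 else 0) + delta n j)"
    proof (cases "r = 0")
      case True thus ?thesis by (simp add: coef_top)
    next
      case False
      hence "1 \<le> r" by simp
      from A_det_shift[where 'a='a, OF this assms] show ?thesis by simp
    qed
  qed
  finally show ?thesis .
qed

definition shuf_ok :: "nat \<Rightarrow> nat \<Rightarrow> (nat \<Rightarrow> nat) \<Rightarrow> (nat \<Rightarrow> nat) \<Rightarrow> bool" where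
  "shuf_ok m n a b \<longleftrightarrow> (\<forall>i j. i < j \<longrightarrow> j < m \<longrightarrow> a i < a j) \<and> (\<forall>i j. i < j \<longrightarrow> j < n \<longrightarrow> b i < b j)
     \<and> (\<forall>t<m. a t < m + n) \<and> (\<forall>k<n. b k < m + n) \<and> (\<forall>t<m. \<forall>k<n. a t \<noteq> b k)"

definition shufM :: "'b mat \<Rightarrow> nat \<Rightarrow> nat \<Rightarrow> (nat \<Rightarrow> nat) \<Rightarrow> (nat \<Rightarrow> nat) \<Rightarrow> 'b mat" where
  "shufM A m n a b = mat (m + n) (m + n) (\<lambda>(i,j). A $$ (if i < m then a i else b (i - m), j))"

lemma strict_lower:
  assumes "\<forall>i j. i < j \<longrightarrow> j < m \<longrightarrow> f i < (f j :: nat)" "t < m"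
  shows "f 0 + t \<le> f t"
  using assms(2)
proof (induction t)
  case (Suc t)
  thus ?case using assms(1)[rule_format, of t "Suc t"] by simp
qed simp

lemma strict_upper:
  assumes "\<forall>i j. i < j \<longrightarrow> j < m \<longrightarrow> f i < (f j :: nat)" "t \<le> s" "s < m"
  shows "f t + (s - t) \<le> f s"
  using assms(2,3)
proof (induction s)
  case 0 thus ?case by simp
next
  case (Suc s)
  show ?case
  proof (cases "t = Suc s")
    case True thus ?thesis by simp
  next
    case False
    hence "t \<le> s" using Suc.prems by simp
    with Suc.IH Suc.prems have "f t + (s - t) \<le> f s" by simp
    moreover have "f s < f (Suc s)" using assms(1) Suc.prems by simp
    ultimately show ?thesis using \<open>t \<le> s\<close> by simp
  qed
qed

lemma shuf_cover:
  assumes ok: "shuf_ok m n a b" and p: "p < m + n"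
  shows "(\<exists>t<m. a t = p) \<or> (\<exists>k<n. b k = p)"
proof -
  define \<sigma> where "\<sigma> i = (if i < m then a i else b (i - m))" for i
  have inj: "inj_on \<sigma> {..<m+n}"
  proof (rule inj_onI)
    fix i j assume ij: "i \<in> {..<m+n}" "j \<in> {..<m+n}" "\<sigma> i = \<sigma> j"
    show "i = j"
    proof (cases "i < m"; cases "j < m")
      assume "i < m" "j < m"
      thus ?thesis using ij ok unfolding shuf_ok_def \<sigma>_def
        by (metis less_irrefl nat_neq_iff)
    next
      assume "i < m" "\<not> j < m"
      thus ?thesis using ij ok unfolding shuf_ok_def \<sigma>_def by auto
    next
      assume "\<not> i < m" "j < m"
      thus ?thesis using ij ok unfolding shuf_ok_def \<sigma>_def by (metis add_diff_inverse_nat lessThan_iff nat_add_left_cancel_less)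
    next
      assume "\<not> i < m" "\<not> j < m"
      hence "b (i - m) = b (j - m)" using ij unfolding \<sigma>_def by simp
      moreover have "i - m < n" "j - m < n" using ij \<open>\<not> i < m\<close> \<open>\<not> j < m\<close> by auto
      ultimately have "i - m = j - m" using ok unfolding shuf_ok_def by (metis less_irrefl nat_neq_iff)
      thus ?thesis using \<open>\<not> i < m\<close> \<open>\<not> j < m\<close> by simp
    qed
  qed
  have sub: "\<sigma> ` {..<m+n} \<subseteq> {..<m+n}"
    using ok unfolding shuf_ok_def \<sigma>_def by auto
  have "\<sigma> ` {..<m+n} = {..<m+n}" by (rule endo_inj_surj[OF _ sub inj]) simp
  with p obtain i where i: "i < m + n" "\<sigma> i = p" by (metis imageE lessThan_iff)
  show ?thesis
  proof (cases "i < m")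
    case True thus ?thesis using i unfolding \<sigma>_def by auto
  next
    case False thus ?thesis using i unfolding \<sigma>_def by (intro disjI2 exI[of _ "i - m"]) auto
  qed
qed

lemma shuf_a_ge: "shuf_ok m n a b \<Longrightarrow> t < m \<Longrightarrow> t \<le> a t"
  using strict_lower[of m a t] unfolding shuf_ok_def by simp

lemma det_shufM:
  fixes A :: "'b::comm_ring_1 mat"
  assumes A: "A \<in> carrier_mat (m + n) (m + n)" and ok: "shuf_ok m n a b"
  shows "det (shufM A m n a b) = (- 1) ^ (\<Sum>t<m. a t - t) * det A"
  using ok
proof (induction "\<Sum>t<m. a t - t" arbitrary: a b rule: less_induct)
  case less
  note ok = less.prems
  show ?case
  proof (cases "(\<Sum>t<m. a t - t) = 0")
    case True
    hence aid: "a t = t" if "t < m" for t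
    proof -
      have "a t - t = 0" using True that by simp
      thus ?thesis using shuf_a_ge[OF ok that] by simp
    qed
    have bge: "m \<le> b k" if "k < n" for k
    proof (rule ccontr)
      assume "\<not> m \<le> b k"
      hence "a (b k) = b k" "b k < m" using aid by auto
      thus False using ok that unfolding shuf_ok_def by metis
    qed
    have bid: "b k = m + k" if k: "k < n" for k
    proof -
      have b0: "m \<le> b 0" using bge k by simp
      have "b 0 + k \<le> b k" using strict_lower[of n b k] ok k unfolding shuf_ok_def by simp
      moreover have "b k + (n - 1 - k) \<le> b (n - 1)"
        using strict_upper[of n b k "n - 1"] ok k unfolding shuf_ok_def by simp
      moreover have "b (n - 1) < m + n" using ok k unfolding shuf_ok_def by simp
      ultimately show ?thesis using b0 k by linarith
    qed
    have "shufM A m n a b = A"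
      unfolding shufM_def using A by (intro eq_matI) (auto simp: aid bid)
    thus ?thesis using True by simp
  next
    case False
    then obtain t0 where t0: "t0 < m" "a t0 - t0 \<noteq> 0" by (meson sum.neutral lessThan_iff)
    define t where "t = (LEAST t. t < m \<and> t < a t)"
    have tP: "t < m \<and> t < a t" unfolding t_def by (rule LeastI[of _ t0]) (use t0 in auto)
    have tmin: "\<And>s. s < t \<Longrightarrow> a s = s"
    proof -
      fix s assume s: "s < t"
      hence "\<not> (s < m \<and> s < a s)" unfolding t_def by (rule not_less_Least)
      moreover have "s < m" using s tP by simp
      ultimately show "a s = s" using shuf_a_ge[OF ok \<open>s < m\<close>] by simp
    qed
    define p where "p = a t - 1"
    have p_lt: "p < a t" "t \<le> p" using tP unfolding p_def by auto
    have p_not_a: "a s \<noteq> p" if "s < m" for s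
    proof (cases "s < t")
      case True thus ?thesis using tmin p_lt by auto
    next
      case False
      hence "a t \<le> a s" using ok that unfolding shuf_ok_def by (metis le_less not_less)
      thus ?thesis using p_lt by auto
    qed
    have "p < m + n" using p_lt tP ok unfolding shuf_ok_def by auto
    from shuf_cover[OF ok this] p_not_a obtain k where k: "k < n" "b k = p" by blast
    define a' where "a' = a(t := p)"
    define b' where "b' = b(k := a t)"
    have ok': "shuf_ok m n a' b'"
      unfolding shuf_ok_def
    proof (intro conjI allI impI)
      fix i j assume ij: "i < j" "j < m"
      show "a' i < a' j"
      proof -
        have "a i < a j" using ok ij unfolding shuf_ok_def by simp
        moreover have "i = t \<Longrightarrow> p < a j" using ok ij p_lt unfolding shuf_ok_def by (metis less_trans)
        moreover have "j = t \<Longrightarrow> a i < p" using p_not_a[of i] ok ij p_lt unfolding shuf_ok_def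
          by (metis less_SucE p_def Suc_pred' less_trans zero_less_iff_neq_zero not_less0 diff_Suc_1 less_antisym)
        ultimately show ?thesis unfolding a'_def using ij by auto
      qed
    next
      fix i j assume ij: "i < j" "j < n"
      show "b' i < b' j"
      proof -
        have bij: "b i < b j" using ok ij unfolding shuf_ok_def by simp
        have "i = k \<Longrightarrow> a t < b j"
        proof -
          assume "i = k"
          hence "p < b j" using bij k by simp
          moreover have "b j \<noteq> a t" using ok ij tP unfolding shuf_ok_def by metis
          ultimately show "a t < b j" unfolding p_def by linarith
        qed
        moreover have "j = k \<Longrightarrow> b i < a t" using bij k p_lt by simp
        ultimately show ?thesis unfolding b'_def using ij bij by auto
      qed
    next
      fix i assume "i < m" thus "a' i < m + n" using ok \<open>p < m + n\<close> unfolding shuf_ok_def a'_def by auto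
    next
      fix i assume "i < n" thus "b' i < m + n" using ok tP unfolding shuf_ok_def b'_def by auto
    next
      fix i j assume ij: "i < m" "j < n"
      show "a' i \<noteq> b' j"
      proof (cases "i = t"; cases "j = k")
        assume "i = t" "j = k" thus ?thesis unfolding a'_def b'_def using p_lt by simp
      next
        assume "i = t" "j \<noteq> k"
        thus ?thesis unfolding a'_def b'_def using k ok ij unfolding shuf_ok_def by (metis fun_upd_apply nat_neq_iff)
      next
        assume "i \<noteq> t" "j = k"
        thus ?thesis unfolding a'_def b'_def using ok ij tP unfolding shuf_ok_def by (metis fun_upd_apply nat_neq_iff)
      next
        assume "i \<noteq> t" "j \<noteq> k"
        thus ?thesis unfolding a'_def b'_def using ok ij unfolding shuf_ok_def by simp
      qed
    qed
    have sum_eq: "(\<Sum>s<m. a s - s) = Suc (\<Sum>s<m. a' s - s)"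
    proof -
      have "(\<Sum>s<m. a s - s) = (a t - t) + (\<Sum>s\<in>{..<m} - {t}. a s - s)"
        using tP by (intro sum.remove) auto
      moreover have "(\<Sum>s<m. a' s - s) = (a' t - t) + (\<Sum>s\<in>{..<m} - {t}. a' s - s)"
        using tP by (intro sum.remove) auto
      moreover have "(\<Sum>s\<in>{..<m} - {t}. a' s - s) = (\<Sum>s\<in>{..<m} - {t}. a s - s)"
        unfolding a'_def by (intro sum.cong) auto
      moreover have "a' t - t = a t - t - 1" unfolding a'_def p_def by simp
      ultimately show ?thesis using tP by linarith
    qed
    have IH: "det (shufM A m n a' b') = (- 1) ^ (\<Sum>s<m. a' s - s) * det A"
      using less.hyps[OF _ ok'] sum_eq by simp
    have sw: "shufM A m n a b = swaprows t (m + k) (shufM A m n a' b')"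
      unfolding shufM_def by (rule eq_matI) (use tP k in \<open>auto simp: a'_def b'_def p_def\<close>)
    have "det (shufM A m n a b) = - det (shufM A m n a' b')"
      unfolding sw by (rule det_swaprows[where n="m+n"]) (use tP k in \<open>auto simp: shufM_def\<close>)
    also have "\<dots> = (- 1) ^ (\<Sum>s<m. a s - s) * det A"
      unfolding IH sum_eq by simp
    finally show ?thesis .
  qed
qed

definition Bm :: "nat \<Rightarrow> nat \<Rightarrow> 'a::{field,finite} hatS mat" where
  "Bm n m = mat m (m + n) (\<lambda>(i,p). (- 1) ^ nat \<bar>int n + int m - 1 - int i - int p\<bar>
      * frob_int (int n - int (i + 1)) (E_W n (X :: nat \<Rightarrow> 'a hatS) (int n + int m - 1 - int i - int p)))"

definition Cm :: "nat \<Rightarrow> nat \<Rightarrow> 'a::{field,finite} hatS mat" where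
  "Cm n m = mat (m + n) n (\<lambda>(p,k). frob_int (int n - int m + int p) (X k :: 'a hatS))"

lemma sum_atMost_rev: "(\<Sum>r\<le>n. g (n - r)) = (\<Sum>s\<le>(n::nat). g s)"
  by (rule sum.reindex_bij_witness[of _ "\<lambda>s. n - s" "\<lambda>s. n - s"]) auto

lemma BC_zero:
  assumes i: "i < m" and k: "k < n"
  shows "(\<Sum>p<m + n. Bm n m $$ (i,p) * Cm n m $$ (p,k) :: 'a::{field,finite} hatS) = 0"
proof -
  let ?q = "CARD('a)"
  define s where "s = int n - int (i + 1)"
  define f where "f p = (Bm n m $$ (i,p) * Cm n m $$ (p,k) :: 'a hatS)" for p
  define h where "h r = n + m - 1 - i - r" for r
  have hr: "int n + int m - 1 - int i - int (h r) = int r" if "r \<le> n" for r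
    using that i unfolding h_def by simp
  have hlt: "h r < m + n" if "r \<le> n" for r using that i unfolding h_def by simp
  have inj: "inj_on h {..n}" unfolding h_def using i by (intro inj_onI) auto
  have "(\<Sum>p<m + n. f p) = (\<Sum>p\<in>h ` {..n}. f p)"
  proof (rule sum.mono_neutral_right)
    show "h ` {..n} \<subseteq> {..<m + n}" using hlt by auto
    show "\<forall>p\<in>{..<m + n} - h ` {..n}. f p = 0"
    proof
      fix p assume p: "p \<in> {..<m + n} - h ` {..n}"
      let ?r = "int n + int m - 1 - int i - int p"
      have nr: "\<not> (0 \<le> ?r \<and> ?r \<le> int n)"
      proof
        assume "0 \<le> ?r \<and> ?r \<le> int n"
        hence "nat ?r \<le> n" "p = h (nat ?r)" unfolding h_def by auto
        thus False using p by auto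
      qed
      have E0: "E_W n (X :: nat \<Rightarrow> 'a hatS) ?r = 0"
        unfolding E_W_def by (rule if_not_P[OF nr])
      show "f p = 0" unfolding f_def Bm_def using p i E0 by simp
    qed
  qed simp
  also have "\<dots> = (\<Sum>r\<le>n. f (h r))" using sum.reindex[OF inj, of f] by (simp add: o_def)
  also have "\<dots> = (\<Sum>r\<le>n. frob_int s (coef n (n - r) * X k ^ (?q ^ (n - r))))"
  proof (rule sum.cong[OF refl])
    fix r assume r: "r \<in> {..n}"
    hence r: "r \<le> n" by simp
    have "f (h r) = (- 1) ^ r * frob_int s ((- 1) ^ r * coef n (n - r))
        * frob_int (int n - int m + int (h r)) (X k :: 'a hatS)"
      unfolding f_def Bm_def Cm_def using hlt[OF r] i k r
      by (simp add: hr[OF r] E_W_coef s_def)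
    also have "frob_int (int n - int m + int (h r)) (X k :: 'a hatS)
        = frob_int s (frob_int (int (n - r)) (X k))"
      unfolding frob_frob s_def h_def using r i by (intro arg_cong2[where f=frob_int] refl) simp
    also have "frob_int (int (n - r)) (X k :: 'a hatS) = X k ^ (?q ^ (n - r))"
      by (rule frob_nat)
    finally show "f (h r) = frob_int s (coef n (n - r) * X k ^ (?q ^ (n - r)))"
      by (simp add: frob_mult frob_uminus mult.assoc[symmetric] power_add[symmetric] flip: power_mult_distrib)
  qed
  also have "\<dots> = frob_int s (\<Sum>r\<le>n. coef n (n - r) * X k ^ (?q ^ (n - r)))"
    by (simp add: frob_sum')
  also have "(\<Sum>r\<le>n. coef n (n - r) * X k ^ (?q ^ (n - r))) = (\<Sum>r\<le>n. coef n r * (X k :: 'a hatS) ^ (?q ^ r))"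
    by (rule sum_atMost_rev[where g="\<lambda>r. coef n r * (X k :: 'a hatS) ^ (?q ^ r)"])
  also have "\<dots> = 0" by (rule coef_relation[OF k])
  finally show ?thesis unfolding f_def by simp
qed

lemma det_permute_cols:
  assumes A: "A \<in> carrier_mat n n" and p: "p permutes {0..<n}"
  shows "det (mat n n (\<lambda>(i,j). A $$ (i, p j))) = signof p * det A"
proof -
  have "det (mat n n (\<lambda>(i,j). A $$ (i, p j))) = det (transpose_mat (mat n n (\<lambda>(i,j). A $$ (i, p j))))"
    by (rule det_transpose[of _ n, symmetric]) simp
  also have "transpose_mat (mat n n (\<lambda>(i,j). A $$ (i, p j))) = mat n n (\<lambda>(i,j). transpose_mat A $$ (p i, j))"
    using A p by (intro eq_matI) (auto simp: permutes_in_image)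
  also have "det \<dots> = signof p * det (transpose_mat A)"
    by (rule det_permute_rows[OF _ p]) (use A in simp)
  also have "det (transpose_mat A) = det A" by (rule det_transpose[OF A])
  finally show ?thesis .
qed

definition rv :: "nat \<Rightarrow> nat \<Rightarrow> nat" where
  "rv m j = (if j < m then m - 1 - j else j)"

lemma rv_permutes: "rv m permutes {0..<m}"
proof (rule bij_imp_permutes)
  show "bij_betw (rv m) {0..<m} {0..<m}"
    by (rule bij_betw_byWitness[of _ "rv m"]) (auto simp: rv_def)
qed (auto simp: rv_def)

lemma signof_sq: "(signof p :: 'b::comm_ring_1) * signof p = 1"
  by (simp add: sign_def)

lemma sum_ind_left:
  assumes "x < (N::nat)"
  shows "(\<Sum>p\<in>{0..<N}. (if p = x then 1 else 0) * g p) = (g x :: 'b::comm_ring_1)"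
proof -
  have "(\<Sum>p\<in>{0..<N}. (if p = x then 1 else 0) * g p) = (\<Sum>p\<in>{0..<N}. if p = x then g p else 0)"
    by (intro sum.cong) auto
  also have "\<dots> = g x" by (subst sum.delta) (use assms in auto)
  finally show ?thesis .
qed

lemma sum_ind_right:
  assumes "x < (N::nat)"
  shows "(\<Sum>p\<in>{0..<N}. g p * (if p = x then 1 else 0)) = (g x :: 'b::comm_ring_1)"
proof -
  have "(\<Sum>p\<in>{0..<N}. g p * (if p = x then 1 else 0)) = (\<Sum>p\<in>{0..<N}. if p = x then g p else 0)"
    by (intro sum.cong) auto
  also have "\<dots> = g x" by (subst sum.delta) (use assms in auto)
  finally show ?thesis .
qed

lemma prod_list_ones: "(\<forall>x\<in>set xs. x = 1) \<Longrightarrow> prod_list xs = (1 :: 'b::monoid_mult)"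
  by (induction xs) auto

context
  fixes n m :: nat and mu :: "nat \<Rightarrow> nat"
  assumes m1: "m \<ge> 1" and part: "is_partition mu"
    and sub: "subpart mu (\<lambda>i. if i < m then n else 0)"
begin

lemma mu_anti: "i \<le> j \<Longrightarrow> mu j \<le> mu i"
proof -
  assume "i \<le> j"
  show ?thesis by (rule lift_Suc_antimono_le[of mu, OF _ \<open>i \<le> j\<close>]) (use part in \<open>simp add: is_partition_def\<close>)
qed

lemma mu_bound: "mu i \<le> (if i < m then n else 0)"
  using sub unfolding subpart_def by blast

lemma mu_le: "mu i \<le> n"
  using mu_bound[of i] by (simp split: if_splits)

lemma mu_zero: "m \<le> i \<Longrightarrow> mu i = 0"
  using mu_bound[of i] by (simp split: if_splits)

lemma conj_sub:
  assumes j: "1 \<le> j" shows "{i. j \<le> mu i} \<subseteq> {..<m}"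
proof (rule subsetI)
  fix i assume "i \<in> {i. j \<le> mu i}"
  hence nz: "mu i \<noteq> 0" using j by simp
  show "i \<in> {..<m}"
  proof (rule ccontr)
    assume "i \<notin> {..<m}"
    hence "m \<le> i" by simp
    hence "mu i = 0" by (rule mu_zero)
    with nz show False by simp
  qed
qed

lemma conj_le: "1 \<le> j \<Longrightarrow> conj_part mu j \<le> m"
proof -
  assume "1 \<le> j"
  from card_mono[OF _ conj_sub[OF this]] show ?thesis unfolding conj_part_def by simp
qed

lemma conj_anti: "1 \<le> j \<Longrightarrow> conj_part mu (Suc j) \<le> conj_part mu j"
  unfolding conj_part_def
proof -
  assume j: "1 \<le> j"
  have "finite {i. j \<le> mu i}" by (rule finite_subset[OF conj_sub[OF j]]) simp
  thus "card {i. Suc j \<le> mu i} \<le> card {i. j \<le> mu i}" by (rule card_mono) auto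
qed

lemma conj_big: "k + 1 \<le> mu j \<Longrightarrow> j + 1 \<le> conj_part mu (k + 1)"
proof -
  assume h: "k + 1 \<le> mu j"
  have "{..j} \<subseteq> {i. k + 1 \<le> mu i}"
  proof
    fix i assume "i \<in> {..j}"
    hence "mu j \<le> mu i" using mu_anti by simp
    thus "i \<in> {i. k + 1 \<le> mu i}" using h by simp
  qed
  moreover have fin: "finite {i. k + 1 \<le> mu i}" by (rule finite_subset[OF conj_sub]) simp_all
  ultimately have "card {..j} \<le> conj_part mu (k + 1)" unfolding conj_part_def
    using card_mono[OF fin] by blast
  thus ?thesis by simp
qed

lemma conj_small: "mu j \<le> k \<Longrightarrow> conj_part mu (k + 1) \<le> j"
proof -
  assume h: "mu j \<le> k"
  have "{i. k + 1 \<le> mu i} \<subseteq> {..<j}"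
  proof
    fix i assume "i \<in> {i. k + 1 \<le> mu i}"
    hence "k + 1 \<le> mu i" by simp
    thus "i \<in> {..<j}" using h mu_anti[of j i] by (cases "i < j") auto
  qed
  hence "conj_part mu (k + 1) \<le> card {..<j}" unfolding conj_part_def by (intro card_mono) auto
  thus ?thesis by simp
qed

definition "aa t = t + mu (m - 1 - t)"
definition "bb k = m + k - conj_part mu (k + 1)"

lemma shuf_ok_ab: "shuf_ok m n aa bb"
  unfolding shuf_ok_def
proof (intro conjI allI impI)
  fix i j assume ij: "i < j" "j < m"
  have "mu (m - 1 - i) \<le> mu (m - 1 - j)" by (rule mu_anti) (use ij in simp)
  thus "aa i < aa j" unfolding aa_def using ij by linarith
next
  fix i j assume ij: "i < j" "j < n"
  have "conj_part mu (j + 1) \<le> conj_part mu (i + 1)"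
    by (rule lift_Suc_antimono_le_ivl[where N="{1..}" and f="conj_part mu"]) (use ij in \<open>auto intro: conj_anti\<close>)
  moreover have "conj_part mu (j + 1) \<le> m" "conj_part mu (i + 1) \<le> m" by (auto intro: conj_le)
  ultimately show "bb i < bb j" unfolding bb_def using ij by linarith
next
  fix t assume "t < m"
  thus "aa t < m + n" unfolding aa_def using mu_le[of "m - 1 - t"] by linarith
next
  fix k assume "k < n"
  thus "bb k < m + n" unfolding bb_def by linarith
next
  fix t k assume tk: "t < m" "k < n"
  define j where "j = m - 1 - t"
  have t: "t = m - 1 - j" "j < m" using tk unfolding j_def by auto
  have c: "conj_part mu (k + 1) \<le> m" by (auto intro: conj_le)
  show "aa t \<noteq> bb k"
  proof (cases "k + 1 \<le> mu j")
    case True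
    from conj_big[OF this] show ?thesis unfolding aa_def bb_def j_def[symmetric] using t c True by linarith
  next
    case False
    hence "mu j \<le> k" by simp
    from conj_small[OF this] show ?thesis unfolding aa_def bb_def j_def[symmetric] using t c \<open>mu j \<le> k\<close> by linarith
  qed
qed

lemma psize_eq: "psize mu = (\<Sum>t<m. aa t - t)"
proof -
  have "psize mu = (\<Sum>i<m. mu i)"
    unfolding psize_def
  proof (rule sum.mono_neutral_left)
    show "{i. mu i \<noteq> 0} \<subseteq> {..<m}"
    proof
      fix x assume "x \<in> {i. mu i \<noteq> 0}"
      thus "x \<in> {..<m}" using mu_zero[of x] by (cases "m \<le> x") auto
    qed
  qed auto
  also have "\<dots> = (\<Sum>t<m. mu (m - Suc t))" by (rule sum.nat_diff_reindex[symmetric])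
  also have "\<dots> = (\<Sum>t<m. aa t - t)" unfolding aa_def by (intro sum.cong) auto
  finally show ?thesis .
qed

end

theorem mainTheorem3:
  fixes n m :: nat and mu :: "nat \<Rightarrow> nat"
  assumes "m \<ge> 1"
    and "is_partition mu"
    and "subpart mu (\<lambda>i. if i < m then n else 0)"
  shows "T_W n (X :: nat \<Rightarrow> 'a::{field,finite} hatS) (\<lambda>i. if i < m then n else 0) mu
           * det (mat n n (\<lambda>(i, j). frob_int (int n + int (j + 1) - int m - 1) (X i)))
         = (-1) ^ (n * m + psize mu)
           * det (mat n n (\<lambda>(i, j).
               frob_int (int n + int (j + 1) - int (conj_part mu (j + 1)) - 1) (X i)))"
proof (cases "n = 0")
  case True
  have mu0: "mu i = 0" for i using mu_le[OF assms, of i] True by simp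
  have "plen (\<lambda>i. if i < m then n else 0) = 0" "plen mu = 0" using True mu0 by (simp_all add: plen_def)
  moreover have "psize mu = 0" using mu0 by (simp add: psize_def)
  ultimately show ?thesis using True by (simp add: T_W_def Let_def)
next
  case False
  hence n1: "n \<ge> 1" by simp
  note m1 = assms(1) and part = assms(2) and sub = assms(3)
  let ?lam = "\<lambda>i. if i < m then n else 0"
  let ?E = "E_W n (X :: nat \<Rightarrow> 'a hatS)"
  define a where "a = aa m mu"
  define b where "b = bb m mu"
  have ok: "shuf_ok m n a b" unfolding a_def b_def by (rule shuf_ok_ab[OF m1 part sub])
  have a_lt: "a t < m + n" if "t < m" for t using ok that unfolding shuf_ok_def by simp
  have a_inj: "a i = a j \<longleftrightarrow> i = j" if "i < m" "j < m" for i j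
    using ok that unfolding shuf_ok_def by (metis less_irrefl nat_neq_iff)
  have ab: "a t \<noteq> b k" if "t < m" "k < n" for t k using ok that unfolding shuf_ok_def by simp
  have b_lt: "b k < m + n" if "k < n" for k using ok that unfolding shuf_ok_def by simp

  define Tm where "Tm = mat m m (\<lambda>(i,j). (- 1) ^ nat \<bar>int n - int (mu j) - int (i + 1) + int (j + 1)\<bar>
      * frob_int (int n - int (i + 1)) (?E (int n - int (mu j) - int (i + 1) + int (j + 1))))"
  define D1 where "D1 = mat n n (\<lambda>(i, j).
               frob_int (int n + int (j + 1) - int (conj_part mu (j + 1)) - 1) (X i :: 'a hatS))"
  define D2 where "D2 = mat n n (\<lambda>(i, j). frob_int (int n + int (j + 1) - int m - 1) (X i :: 'a hatS))"

  have plen_lam: "plen ?lam = m" using n1 unfolding plen_def by simp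
  have plen_mu: "plen mu \<le> m"
  proof -
    have "{i. mu i \<noteq> 0} \<subseteq> {..<m}"
    proof
      fix x assume "x \<in> {i. mu i \<noteq> 0}"
      thus "x \<in> {..<m}" using mu_zero[OF m1 part sub, of x] by (cases "m \<le> x") auto
    qed
    from card_mono[OF _ this] show ?thesis unfolding plen_def by simp
  qed
  have TW: "T_W n (X :: nat \<Rightarrow> 'a hatS) ?lam mu = det Tm"
  proof -
    have N: "max (plen ?lam) (plen mu) = m" using plen_lam plen_mu by simp
    show ?thesis unfolding T_W_def Let_def N Tm_def
      by (intro arg_cong[where f=det] eq_matI) auto
  qed

  define G where "G = mat (m + n) (m + n) (\<lambda>(i,p). if i < m then Bm n m $$ (i,p) else if p = i - m then 1 else (0 :: 'a hatS))"
  define W where "W = mat (m + n) (m + n) (\<lambda>(p,c). if c < m then (if p = a c then 1 else 0) else Cm n m $$ (p, c - m) :: 'a hatS)"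
  define Trev where "Trev = mat m m (\<lambda>(i,t). Bm n m $$ (i, a t) :: 'a hatS)"
  define Z where "Z = mat n m (\<lambda>(k,t). if k = a t then 1 else (0 :: 'a hatS))"
  define C0 where "C0 = mat n n (\<lambda>(k',k). Cm n m $$ (k',k) :: 'a hatS)"
  have G: "G \<in> carrier_mat (m + n) (m + n)" unfolding G_def by simp
  have W: "W \<in> carrier_mat (m + n) (m + n)" unfolding W_def by simp

  have GW: "G * W = four_block_mat Trev (0\<^sub>m m n) Z C0"
  proof (rule eq_matI)
    fix i c assume ic: "i < dim_row (four_block_mat Trev (0\<^sub>m m n) Z C0)" "c < dim_col (four_block_mat Trev (0\<^sub>m m n) Z C0)"
    hence i: "i < m + n" and c: "c < m + n" by (auto simp: Trev_def C0_def)
    have "(G * W) $$ (i, c) = (\<Sum>p\<in>{0..<m+n}. G $$ (i,p) * W $$ (p,c))"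
      using i c G W by (simp add: scalar_prod_def)
    also have "\<dots> = four_block_mat Trev (0\<^sub>m m n) Z C0 $$ (i, c)"
    proof (cases "i < m"; cases "c < m")
      assume ic: "i < m" "c < m"
      have "(\<Sum>p\<in>{0..<m+n}. G $$ (i,p) * W $$ (p,c)) = (\<Sum>p\<in>{0..<m+n}. Bm n m $$ (i,p) * (if p = a c then 1 else 0))"
        using ic by (intro sum.cong) (auto simp: G_def W_def)
      also have "\<dots> = Bm n m $$ (i, a c)" by (rule sum_ind_right[OF a_lt[OF ic(2)]])
      finally show ?thesis using ic by (simp add: Trev_def C0_def)
    next
      assume ic: "i < m" "\<not> c < m"
      have "(\<Sum>p\<in>{0..<m+n}. G $$ (i,p) * W $$ (p,c)) = (\<Sum>p<m+n. Bm n m $$ (i,p) * Cm n m $$ (p, c - m))"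
        using ic c by (intro sum.cong) (auto simp: G_def W_def)
      also have "\<dots> = 0" by (rule BC_zero) (use ic c in auto)
      finally show ?thesis using ic c by (simp add: Trev_def C0_def)
    next
      assume ic: "\<not> i < m" "c < m"
      have "(\<Sum>p\<in>{0..<m+n}. G $$ (i,p) * W $$ (p,c)) = (\<Sum>p\<in>{0..<m+n}. (if p = i - m then 1 else 0) * (if p = a c then 1 else (0 :: 'a hatS)))"
        using ic i by (intro sum.cong) (auto simp: G_def W_def)
      also have "\<dots> = (if i - m = a c then 1 else 0)" by (rule sum_ind_left) (use i ic in auto)
      finally show ?thesis using ic i by (simp add: Trev_def C0_def Z_def)
    next
      assume ic: "\<not> i < m" "\<not> c < m"
      have "(\<Sum>p\<in>{0..<m+n}. G $$ (i,p) * W $$ (p,c)) = (\<Sum>p\<in>{0..<m+n}. (if p = i - m then 1 else 0) * Cm n m $$ (p, c - m))"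
        using ic i c by (intro sum.cong) (auto simp: G_def W_def)
      also have "\<dots> = Cm n m $$ (i - m, c - m)" by (rule sum_ind_left) (use i ic in auto)
      finally show ?thesis using ic i c by (simp add: Trev_def C0_def Z_def)
    qed
    finally show "(G * W) $$ (i, c) = four_block_mat Trev (0\<^sub>m m n) Z C0 $$ (i, c)" .
  qed (auto simp: G_def W_def Trev_def C0_def)

  have dGW: "det G * det W = det Trev * det C0"
  proof -
    have "det G * det W = det (G * W)" by (rule det_mult[OF G W, symmetric])
    also have "\<dots> = det Trev * det C0" unfolding GW
      by (rule det_four_block_mat_upper_right_zero) (auto simp: Trev_def C0_def Z_def)
    finally show ?thesis .
  qed

  define sr where "sr = (signof (rv m) :: 'a hatS)"
  have sr2: "sr * sr = 1" unfolding sr_def by (rule signof_sq)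
  define U where "U = mat m m (\<lambda>(i,j). Bm n m $$ (i, n + (m - 1 - j)) :: 'a hatS)"
  define BI0 where "BI0 = mat m m (\<lambda>(i,t). Bm n m $$ (i, n + t) :: 'a hatS)"
  define BJ0 where "BJ0 = mat m n (\<lambda>(i,j). Bm n m $$ (i, j) :: 'a hatS)"
  have E0: "?E 0 = 1" using E_W_coef[of 0 n, where 'a='a] by (simp add: coef_top)
  have U1: "det U = 1"
  proof -
    have "det U = prod_list (diag_mat U)"
    proof (rule det_upper_triangular[where n=m])
      show "upper_triangular U" unfolding upper_triangular_def
      proof (intro allI impI)
        fix i j assume ij: "i < dim_row U" "j < i"
        hence ij': "i < m" "j < i" by (auto simp: U_def)
        have "int n + int m - 1 - int i - int (n + (m - 1 - j)) < 0" using ij' by simp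
        thus "U $$ (i, j) = 0" using ij' by (simp add: U_def Bm_def E_W_def)
      qed
    qed (simp add: U_def)
    also have "\<dots> = 1"
    proof (rule prod_list_ones, intro ballI)
      fix x assume "x \<in> set (diag_mat U)"
      then obtain i where i: "i < m" "x = U $$ (i, i)" by (auto simp: diag_mat_def U_def)
      have "int n + int m - 1 - int i - int (n + (m - 1 - i)) = 0" using i by simp
      thus "x = 1" using i by (simp add: U_def Bm_def E0)
    qed
    finally show ?thesis .
  qed
  have BI0U: "BI0 = mat m m (\<lambda>(i,j). U $$ (i, rv m j))"
    unfolding BI0_def U_def by (intro eq_matI) (auto simp: rv_def)
  have dBI0: "det BI0 = sr"
    unfolding BI0U sr_def using det_permute_cols[OF _ rv_permutes, of U m] U1 by (simp add: U_def)
  have dG: "det G = (- 1) ^ (n * m) * sr"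
  proof -
    have G': "G \<in> carrier_mat (n + m) (n + m)" using G by (simp add: add.commute)
    have "det G = (- 1) ^ (n * m) * det (mat (n + m) (n + m) (\<lambda>(i,j). G $$ (if i < n then i + m else i - n, j)))"
      by (rule det_swap_rows[OF G'])
    also have "mat (n + m) (n + m) (\<lambda>(i,j). G $$ (if i < n then i + m else i - n, j))
        = four_block_mat (1\<^sub>m n) (0\<^sub>m n m) BJ0 BI0"
      by (intro eq_matI) (auto simp: G_def BJ0_def BI0_def)
    also have "det \<dots> = det (1\<^sub>m n :: 'a hatS mat) * det BI0"
      by (rule det_four_block_mat_upper_right_zero) (auto simp: BJ0_def BI0_def)
    finally show ?thesis using dBI0 by simp
  qed

  have r_eq: "int n + int m - 1 - int i - int (a t) = int n - int (mu (m - 1 - t)) - int (i + 1) + int (m - 1 - t + 1)"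
    if "t < m" for i t using that by (simp add: a_def aa_def[OF m1 part sub] of_nat_diff)
  have TrevT: "Trev = mat m m (\<lambda>(i,t). Tm $$ (i, rv m t))"
    unfolding Trev_def
  proof (intro eq_matI)
    fix i t assume it: "i < dim_row (mat m m (\<lambda>(i,t). Tm $$ (i, rv m t)))" "t < dim_col (mat m m (\<lambda>(i,t). Tm $$ (i, rv m t)))"
    hence it: "i < m" "t < m" by auto
    define ent where "ent r = (- 1) ^ nat \<bar>r\<bar> * frob_int (int n - int (i + 1)) (?E r)" for r
    have e1: "Bm n m $$ (i, a t) = ent (int n + int m - 1 - int i - int (a t))"
      using it a_lt[OF it(2)] by (simp add: Bm_def ent_def)
    have e2': "Tm $$ (i, j) = ent (int n - int (mu j) - int (i + 1) + int (j + 1))" if "j < m" for j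
      using it that by (simp add: Tm_def ent_def)
    have "rv m t = m - 1 - t" using it by (simp add: rv_def)
    hence e2: "Tm $$ (i, rv m t) = ent (int n - int (mu (m - 1 - t)) - int (i + 1) + int (m - 1 - t + 1))"
      using e2'[of "m - 1 - t"] it by simp
    show "mat m m (\<lambda>(i,t). Bm n m $$ (i, a t)) $$ (i, t) = mat m m (\<lambda>(i,t). Tm $$ (i, rv m t)) $$ (i, t)"
      using it by (simp only: index_mat case_prod_conv e1 e2 r_eq[OF it(2)])
  qed auto
  have dTrev: "det Trev = sr * det Tm"
    unfolding TrevT sr_def by (rule det_permute_cols[OF _ rv_permutes]) (simp add: Tm_def)

  define Y where "Y = mat m n (\<lambda>(t,c). Cm n m $$ (a t, c) :: 'a hatS)"
  define CJ where "CJ = mat n n (\<lambda>(k,c). Cm n m $$ (b k, c) :: 'a hatS)"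
  have shW: "shufM W m n a b = four_block_mat (1\<^sub>m m) Y (0\<^sub>m n m) CJ"
    unfolding shufM_def
  proof (intro eq_matI)
    fix i c assume ic: "i < dim_row (four_block_mat (1\<^sub>m m) Y (0\<^sub>m n m) CJ)" "c < dim_col (four_block_mat (1\<^sub>m m) Y (0\<^sub>m n m) CJ)"
    hence i: "i < m + n" and c: "c < m + n" by (auto simp: Y_def CJ_def)
    show "mat (m + n) (m + n) (\<lambda>(i, j). W $$ (if i < m then a i else b (i - m), j)) $$ (i, c) =
        four_block_mat (1\<^sub>m m) Y (0\<^sub>m n m) CJ $$ (i, c)"
    proof (cases "i < m")
      case True
      thus ?thesis using i c a_lt[OF True] a_inj[OF True] by (auto simp: W_def Y_def CJ_def)
    next
      case False
      hence k: "i - m < n" using i by simp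
      have nb: "b (i - m) \<noteq> a c'" if "c' < m" for c' using ab[OF that k] by auto
      show ?thesis using False i c b_lt[OF k] nb by (auto simp: W_def Y_def CJ_def)
    qed
  qed (auto simp: Y_def CJ_def)
  have CJD1: "CJ = transpose_mat D1"
  proof (intro eq_matI)
    fix k c assume kc: "k < dim_row (transpose_mat D1)" "c < dim_col (transpose_mat D1)"
    hence kc: "k < n" "c < n" by (auto simp: D1_def)
    have cp: "conj_part mu (k + 1) \<le> m" by (rule conj_le[OF m1 part sub]) simp
    have e: "int n - int m + int (b k) = int n + int (k + 1) - int (conj_part mu (k + 1)) - 1"
      using cp unfolding b_def bb_def[OF m1 part sub] by (simp add: of_nat_diff)
    have "CJ $$ (k, c) = frob_int (int n - int m + int (b k)) (X c)"
      using kc b_lt[OF kc(1)] by (simp add: CJ_def Cm_def)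
    also have "\<dots> = frob_int (int n + int (k + 1) - int (conj_part mu (k + 1)) - 1) (X c)"
      by (simp only: e)
    also have "\<dots> = transpose_mat D1 $$ (k, c)" using kc by (simp add: D1_def)
    finally show "CJ $$ (k, c) = transpose_mat D1 $$ (k, c)" .
  qed (auto simp: CJ_def D1_def)
  have dW: "(- 1) ^ psize mu * det W = det D1"
  proof -
    have "(- 1) ^ psize mu * det W = det (shufM W m n a b)"
      using det_shufM[OF W ok] psize_eq[OF m1 part sub] unfolding a_def by simp
    also have "\<dots> = det (1\<^sub>m m :: 'a hatS mat) * det CJ"
      unfolding shW by (rule det_four_block_mat_lower_left_zero) (auto simp: Y_def CJ_def)
    also have "det CJ = det D1" unfolding CJD1 by (rule det_transpose[of _ n]) (simp add: D1_def)
    finally show ?thesis by simp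
  qed
  have C0D2: "C0 = transpose_mat D2"
  proof (intro eq_matI)
    fix k c assume kc: "k < dim_row (transpose_mat D2)" "c < dim_col (transpose_mat D2)"
    hence kc: "k < n" "c < n" by (auto simp: D2_def)
    have e: "int n - int m + int k = int n + int (k + 1) - int m - 1" by simp
    have "C0 $$ (k, c) = frob_int (int n - int m + int k) (X c)"
      using kc by (simp add: C0_def Cm_def)
    also have "\<dots> = frob_int (int n + int (k + 1) - int m - 1) (X c)"
      by (simp only: e)
    also have "\<dots> = transpose_mat D2 $$ (k, c)" using kc by (simp add: D2_def)
    finally show "C0 $$ (k, c) = transpose_mat D2 $$ (k, c)" .
  qed (auto simp: C0_def D2_def)
  have dC0: "det C0 = det D2" unfolding C0D2 by (rule det_transpose[of _ n]) (simp add: D2_def)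

  define s where "s = ((- 1) ^ psize mu :: 'a hatS)"
  have s2: "s * s = 1" unfolding s_def by (simp flip: power_add power_mult_distrib)
  have dW': "det W = s * det D1"
  proof -
    have "det W = (s * s) * det W" using s2 by simp
    also have "\<dots> = s * (s * det W)" by (simp only: mult.assoc)
    also have "\<dots> = s * det D1" unfolding s_def by (simp only: dW)
    finally show ?thesis .
  qed
  have "det Tm * det D2 = (sr * sr) * (det Tm * det D2)" using sr2 by simp
  also have "\<dots> = sr * (det Trev * det C0)" unfolding dTrev dC0 by (simp add: ac_simps)
  also have "\<dots> = sr * (det G * det W)" unfolding dGW ..
  also have "\<dots> = (sr * sr) * ((- 1) ^ (n * m) * (s * det D1))" unfolding dG dW' by (simp add: ac_simps)
  also have "\<dots> = (- 1) ^ (n * m + psize mu) * det D1" using sr2 unfolding s_def by (simp add: power_add)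
  finally show ?thesis unfolding TW D1_def D2_def .
qed


end
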